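(* Let $p$ be a prime and $X=\Delta_p$. Then there exist independent random variables $\xi_1,\xi_2$ with values in $X$ and distributions $\mu_1,\mu_2$ such that the conditional distribution of $L_2=\xi_1+p\xi_2$ given $L_1=p\xi_1-\xi_2$ is symmetric and $\mu_1,\mu_2\notin I(X)$.
   Context: $\Delta_p$ denotes the compact group of $p$-adic integers. $I(X)$ is the set of shifts of Haar distributions $m_K$ of compact subgroups $K$ of $X$. For random variables $L_1,L_2$ with values in $X$, the conditional distribution of $L_2$ given $L_1$ is called symmetric if the pairs $(L_1,L_2)$ and $(L_1,-L_2)$ are identically distributed. *)

theory Defs
  imports "HOL-Probability.Probability"
begin

text \<open>An element of Delta_p is represented by its compatible sequence of residues
  x n in {0..<p^n} (x n = the residue of the p-adic integer modulo p^n), with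
  x (Suc n) mod p^n = x n.  This is the inverse limit of Z/p^n Z.\<close>

definition padic :: "nat \<Rightarrow> (nat \<Rightarrow> int) set" where
  "padic p = {x. (\<forall>n. 0 \<le> x n \<and> x n < int p ^ n) \<and>
                 (\<forall>n. x (Suc n) mod int p ^ n = x n)}"

definition padic_zero :: "nat \<Rightarrow> nat \<Rightarrow> int" where
  "padic_zero p = (\<lambda>n. 0)"

definition padic_add :: "nat \<Rightarrow> (nat \<Rightarrow> int) \<Rightarrow> (nat \<Rightarrow> int) \<Rightarrow> (nat \<Rightarrow> int)" where
  "padic_add p x y = (\<lambda>n. (x n + y n) mod int p ^ n)"

definition padic_neg :: "nat \<Rightarrow> (nat \<Rightarrow> int) \<Rightarrow> (nat \<Rightarrow> int)" where
  "padic_neg p x = (\<lambda>n. (- x n) mod int p ^ n)"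

definition padic_smul :: "nat \<Rightarrow> int \<Rightarrow> (nat \<Rightarrow> int) \<Rightarrow> (nat \<Rightarrow> int)" where
  "padic_smul p c x = (\<lambda>n. (c * x n) mod int p ^ n)"

text \<open>The topology of Delta_p: the inverse-limit topology, i.e. the subspace topology
  induced by the product of discrete topologies on the residue sequences.\<close>
definition padic_top :: "nat \<Rightarrow> (nat \<Rightarrow> int) topology" where
  "padic_top p = subtopology (product_topology (\<lambda>n. discrete_topology UNIV) UNIV) (padic p)"

definition padic_borel :: "nat \<Rightarrow> (nat \<Rightarrow> int) measure" where
  "padic_borel p = sigma (topspace (padic_top p)) {U. openin (padic_top p) U}"

definition padic_compact_subgroup :: "nat \<Rightarrow> (nat \<Rightarrow> int) set \<Rightarrow> bool" where
  "padic_compact_subgroup p K \<longleftrightarrow>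
     K \<subseteq> padic p \<and> padic_zero p \<in> K \<and>
     (\<forall>x\<in>K. \<forall>y\<in>K. padic_add p x y \<in> K) \<and> (\<forall>x\<in>K. padic_neg p x \<in> K) \<and>
     compactin (padic_top p) K"

text \<open>mu is the (normalized) Haar distribution m_K of the compact subgroup K,
  regarded as a distribution on X: a probability distribution on X concentrated on K
  and invariant under all translations by elements of K.\<close>
definition padic_haar :: "nat \<Rightarrow> (nat \<Rightarrow> int) set \<Rightarrow> (nat \<Rightarrow> int) measure \<Rightarrow> bool" where
  "padic_haar p K \<mu> \<longleftrightarrow>
     prob_space \<mu> \<and> sets \<mu> = sets (padic_borel p) \<and> K \<in> sets \<mu> \<and> emeasure \<mu> K = 1 \<and>
     (\<forall>k\<in>K. distr \<mu> (padic_borel p) (padic_add p k) = \<mu>)"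

definition padic_I :: "nat \<Rightarrow> (nat \<Rightarrow> int) measure \<Rightarrow> bool" where
  "padic_I p \<mu> \<longleftrightarrow>
     (\<exists>K \<nu> a. padic_compact_subgroup p K \<and> padic_haar p K \<nu> \<and> a \<in> padic p \<and>
              \<mu> = distr \<nu> (padic_borel p) (padic_add p a))"

end

theory Submission
  imports Defs
begin


definition cyl :: "nat \<Rightarrow> nat \<Rightarrow> int \<Rightarrow> (nat \<Rightarrow> int) set" where
  "cyl p n r = {x \<in> padic p. x n = r}"

lemma padic_range: "x \<in> padic p \<Longrightarrow> 0 \<le> x n \<and> x n < int p ^ n"
  by (simp add: padic_def)

lemma padic_compat: "x \<in> padic p \<Longrightarrow> x (Suc n) mod int p ^ n = x n"
  by (simp add: padic_def)

lemma padic_mod: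
  assumes x: "x \<in> padic p" and mn: "m \<le> n"
  shows "x n mod int p ^ m = x m"
  using mn
proof (induction n)
  case 0 then show ?case using padic_range[OF x, of 0] by simp
next
  case (Suc n)
  show ?case
  proof (cases "m = Suc n")
    case True then show ?thesis using padic_range[OF x, of m] by simp
  next
    case False
    then have "m \<le> n" using Suc.prems by simp
    have "x (Suc n) mod int p ^ m = (x (Suc n) mod int p ^ n) mod int p ^ m"
      using \<open>m \<le> n\<close> by (simp add: mod_mod_cancel le_imp_power_dvd)
    also have "\<dots> = x m" using padic_compat[OF x] Suc.IH[OF \<open>m \<le> n\<close>] by simp
    finally show ?thesis .
  qed
qed

lemma topspace_padic_top [simp]: "topspace (padic_top p) = padic p"
  by (simp add: padic_top_def)

lemma space_padic_borel [simp]: "space (padic_borel p) = padic p"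
  unfolding padic_borel_def by (simp add: openin_subset space_measure_of_conv)

lemma openin_cyl: "openin (padic_top p) (cyl p n r)"
proof -
  have "openin (product_topology (\<lambda>n. discrete_topology (UNIV::int set)) UNIV) {x. x n = r}"
    unfolding openin_product_topology_alt
  proof (intro ballI)
    fix x :: "nat \<Rightarrow> int" assume "x \<in> {x. x n = r}"
    let ?U = "\<lambda>i. if i = n then {r} else (UNIV::int set)"
    have "finite {i \<in> UNIV. ?U i \<noteq> topspace (discrete_topology UNIV)}" by simp
    moreover have "\<forall>i\<in>UNIV. openin (discrete_topology UNIV) (?U i)" by simp
    moreover have "x \<in> Pi\<^sub>E UNIV ?U" using \<open>x \<in> _\<close> by auto
    moreover have "Pi\<^sub>E UNIV ?U \<subseteq> {x. x n = r}" by (auto simp: PiE_def Pi_def split: if_splits)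
    ultimately show "\<exists>U. finite {i \<in> UNIV. U i \<noteq> topspace (discrete_topology UNIV)} \<and>
          (\<forall>i\<in>UNIV. openin (discrete_topology UNIV) (U i)) \<and> x \<in> Pi\<^sub>E UNIV U \<and> Pi\<^sub>E UNIV U \<subseteq> {x. x n = r}"
      by (intro exI[of _ ?U]) (intro conjI)
  qed
  then show ?thesis
    unfolding padic_top_def openin_subtopology cyl_def by blast
qed

lemma open_union_cyl:
  assumes U: "openin (padic_top p) U" and p: "p > 0"
  shows "U = \<Union>{cyl p n r | n r. cyl p n r \<subseteq> U}"
proof
  show "\<Union>{cyl p n r | n r. cyl p n r \<subseteq> U} \<subseteq> U" by blast
  show "U \<subseteq> \<Union>{cyl p n r | n r. cyl p n r \<subseteq> U}"
  proof
    fix x assume xU: "x \<in> U"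
    from U obtain T where T: "openin (product_topology (\<lambda>n. discrete_topology (UNIV::int set)) UNIV) T"
      and UT: "U = T \<inter> padic p"
      unfolding padic_top_def openin_subtopology by blast
    have xT: "x \<in> T" and xp: "x \<in> padic p" using xU UT by auto
    from T xT obtain V where fin: "finite {i \<in> UNIV. V i \<noteq> topspace (discrete_topology (UNIV::int set))}"
      and xV: "x \<in> Pi\<^sub>E UNIV V" and VT: "Pi\<^sub>E UNIV V \<subseteq> T"
      unfolding openin_product_topology_alt by blast
    have fin': "finite {i. V i \<noteq> UNIV}" using fin by simp
    obtain N where N0: "{i. V i \<noteq> UNIV} \<subseteq> {..<N}" using finite_nat_bounded[OF fin'] by blast
    have N: "i < N" if "V i \<noteq> UNIV" for i using N0 that by blast
    have "cyl p N (x N) \<subseteq> U"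
    proof
      fix y assume "y \<in> cyl p N (x N)"
      then have yp: "y \<in> padic p" and yN: "y N = x N" by (auto simp: cyl_def)
      have "y \<in> Pi\<^sub>E UNIV V"
      proof (simp add: PiE_def Pi_def, intro allI)
        fix i show "y i \<in> V i"
        proof (cases "V i = UNIV")
          case False
          then have "i < N" using N by blast
          then have "y i = x i"
            using padic_mod[OF yp, of i N] padic_mod[OF xp, of i N] yN by simp
          then show ?thesis using xV by (auto simp: PiE_def)
        qed simp
      qed
      then show "y \<in> U" using VT yp UT by auto
    qed
    moreover have "x \<in> cyl p N (x N)" using xp by (simp add: cyl_def)
    ultimately show "x \<in> \<Union>{cyl p n r | n r. cyl p n r \<subseteq> U}" by blast
  qed
qed

lemma sets_padic_borel:
  assumes p: "p > 0"
  shows "sets (padic_borel p) = sigma_sets (padic p) (range (\<lambda>(n,r). cyl p n r))"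
proof -
  have "sets (padic_borel p) = sigma_sets (padic p) {U. openin (padic_top p) U}"
    unfolding padic_borel_def
  proof (subst sets_measure_of)
    show "{U. openin (padic_top p) U} \<subseteq> Pow (topspace (padic_top p))"
    proof -
      have "S \<subseteq> padic p" if "openin (padic_top p) S" for S
        using openin_subset[OF that] by simp
      then show ?thesis by auto
    qed
  qed simp
  also have "\<dots> = sigma_sets (padic p) (range (\<lambda>(n,r). cyl p n r))"
  proof (rule sigma_sets_eqI)
    fix a assume "a \<in> {U. openin (padic_top p) U}"
    then have U: "openin (padic_top p) a" by simp
    have "a = \<Union>((\<lambda>(n,r). cyl p n r) ` {(n,r). cyl p n r \<subseteq> a})"
    proof -
      have "\<Union>{cyl p n r |n r. cyl p n r \<subseteq> a} = \<Union>((\<lambda>(n,r). cyl p n r) ` {(n,r). cyl p n r \<subseteq> a})"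
        by auto
      then show ?thesis using open_union_cyl[OF U p] by simp
    qed
    also have "\<dots> \<in> sigma_sets (padic p) (range (\<lambda>(n,r). cyl p n r))"
      by (intro sigma_sets_UNION) (auto intro: sigma_sets.Basic)
    finally show "a \<in> sigma_sets (padic p) (range (\<lambda>(n,r). cyl p n r))" .
  next
    fix b assume "b \<in> range (\<lambda>(n,r). cyl p n r)"
    then show "b \<in> sigma_sets (padic p) {U. openin (padic_top p) U}"
      using openin_cyl by (auto intro: sigma_sets.Basic)
  qed
  finally show ?thesis .
qed



lemma cyl_range: "cyl p n r \<in> range (\<lambda>(n, r). cyl p n r)"
  by (rule image_eqI[of _ _ "(n,r)"]) auto

lemma cyl_sets: "p > 0 \<Longrightarrow> cyl p n r \<in> sets (padic_borel p)"
  by (simp add: sets_padic_borel sigma_sets.Basic cyl_range)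

lemma cyl_sub: "cyl p n r \<subseteq> padic p" by (auto simp: cyl_def)

lemma padic_0: "x \<in> padic p \<Longrightarrow> x 0 = 0"
  using padic_range[of x p 0] by simp

lemma cyl_0: "cyl p 0 0 = padic p"
  by (auto simp: cyl_def padic_0)

lemma cyl_empty: "cyl p 0 1 = {}"
  by (auto simp: cyl_def padic_0)

lemma measurable_padic:
  assumes p: "p > 0" and f: "f \<in> space M \<rightarrow> padic p"
    and fn: "\<And>n. (\<lambda>\<omega>. f \<omega> n) \<in> M \<rightarrow>\<^sub>M count_space UNIV"
  shows "f \<in> M \<rightarrow>\<^sub>M padic_borel p"
proof (rule measurable_sigma_sets[OF sets_padic_borel[OF p]])
  show "range (\<lambda>(n, r). cyl p n r) \<subseteq> Pow (padic p)" using cyl_sub by auto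
  show "f \<in> space M \<rightarrow> padic p" by fact
  fix y assume "y \<in> range (\<lambda>(n, r). cyl p n r)"
  then obtain n r where y: "y = cyl p n r" by auto
  have "f -` y \<inter> space M = (\<lambda>\<omega>. f \<omega> n) -` {r} \<inter> space M"
    using f by (auto simp: y cyl_def)
  also have "\<dots> \<in> sets M" using measurable_sets[OF fn[of n], of "{r}"] by simp
  finally show "f -` y \<inter> space M \<in> sets M" .
qed

lemma measurable_coord:
  assumes p: "p > 0"
  shows "(\<lambda>x. x n) \<in> padic_borel p \<rightarrow>\<^sub>M count_space UNIV"
proof (subst measurable_count_space_eq2_countable, intro conjI ballI)
  show "(\<lambda>x. x n) \<in> space (padic_borel p) \<rightarrow> UNIV" by simp
  fix a :: int
  have "(\<lambda>x. x n) -` {a} \<inter> space (padic_borel p) = cyl p n a" by (auto simp: cyl_def)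
  then show "(\<lambda>x. x n) -` {a} \<inter> space (padic_borel p) \<in> sets (padic_borel p)"
    using cyl_sets[OF p] by simp
qed

lemma cyl_lift:
  assumes "n \<le> m"
  shows "cyl p n r = \<Union>((\<lambda>t. cyl p m t) ` {t. t mod int p ^ n = r})"
proof
  show "cyl p n r \<subseteq> \<Union>((\<lambda>t. cyl p m t) ` {t. t mod int p ^ n = r})"
  proof
    fix x assume x: "x \<in> cyl p n r"
    then have "x \<in> padic p" "x n = r" by (auto simp: cyl_def)
    then have "x \<in> cyl p m (x m)" "x m mod int p ^ n = r"
      using padic_mod[OF _ assms, of x p] by (auto simp: cyl_def)
    then show "x \<in> \<Union>((\<lambda>t. cyl p m t) ` {t. t mod int p ^ n = r})" by blast
  qed
  show "\<Union>((\<lambda>t. cyl p m t) ` {t. t mod int p ^ n = r}) \<subseteq> cyl p n r"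
  proof
    fix x assume "x \<in> \<Union>((\<lambda>t. cyl p m t) ` {t. t mod int p ^ n = r})"
    then obtain t where "x \<in> padic p" "x m = t" "t mod int p ^ n = r" by (auto simp: cyl_def)
    then show "x \<in> cyl p n r" using padic_mod[OF _ assms, of x p] by (auto simp: cyl_def)
  qed
qed

lemma cyl_int:
  assumes "n \<le> m"
  shows "cyl p n r \<inter> cyl p m s = (if s mod int p ^ n = r then cyl p m s else cyl p 0 1)"
proof -
  have "x n = r \<and> x m = s \<longleftrightarrow> x m = s \<and> s mod int p ^ n = r" if "x \<in> padic p" for x
    using padic_mod[OF that assms] by auto
  then show ?thesis using cyl_empty[of p] by (auto simp: cyl_def)
qed

definition gen2 :: "nat \<Rightarrow> ((nat \<Rightarrow> int) \<times> (nat \<Rightarrow> int)) set set" where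
  "gen2 p = {cyl p n r \<times> cyl p n s | n r s. True}"

lemma gen2_Int_stable: "Int_stable (gen2 p)"
proof (rule Int_stableI)
  fix A B assume "A \<in> gen2 p" "B \<in> gen2 p"
  then obtain n r s m r' s' where A: "A = cyl p n r \<times> cyl p n s" and B: "B = cyl p m r' \<times> cyl p m s'"
    by (auto simp: gen2_def)
  have AB: "A \<inter> B = (cyl p n r \<inter> cyl p m r') \<times> (cyl p n s \<inter> cyl p m s')"
    by (auto simp: A B)
  have G: "cyl p k a \<times> cyl p k b \<in> gen2 p" for k a b unfolding gen2_def by blast
  have E: "{} \<in> gen2 p" using G[of 0 1 1] cyl_empty[of p] by simp
  show "A \<inter> B \<in> gen2 p"
  proof (cases "n \<le> m")
    case True
    show ?thesis unfolding AB cyl_int[OF True]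
      by (cases "r' mod int p ^ n = r"; cases "s' mod int p ^ n = s") (simp_all add: G E cyl_empty)
  next
    case False
    then have "m \<le> n" by simp
    show ?thesis unfolding AB Int_commute[of "cyl p n _"] cyl_int[OF \<open>m \<le> n\<close>]
      by (cases "r mod int p ^ m = r'"; cases "s mod int p ^ m = s'") (simp_all add: G E cyl_empty)
  qed
qed

lemma gen2_sub: "gen2 p \<subseteq> Pow (padic p \<times> padic p)"
  using cyl_sub by (auto simp: gen2_def)

lemma sets_pair_padic:
  assumes p: "p > 0"
  shows "sets (padic_borel p \<Otimes>\<^sub>M padic_borel p) = sigma_sets (padic p \<times> padic p) (gen2 p)"
proof -
  let ?C = "range (\<lambda>(n, r). cyl p n r)"
  have "sets (padic_borel p \<Otimes>\<^sub>M padic_borel p) =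
      sets (sigma (padic p \<times> padic p) {a \<times> b | a b. a \<in> ?C \<and> b \<in> ?C})"
  proof -
    have CP: "?C \<subseteq> Pow (padic p)" using cyl_sub by auto
    have C0: "padic p \<in> ?C" using cyl_range[of p 0 0] cyl_0[of p] by simp
    have "sets (padic_borel p \<Otimes>\<^sub>M padic_borel p) =
      sets (sigma (space (padic_borel p) \<times> space (padic_borel p)) {a \<times> b | a b. a \<in> ?C \<and> b \<in> ?C})"
      by (rule sets_pair_eq[of ?C _ "{padic p}" ?C _ "{padic p}"])
        (simp_all add: CP C0 sets_padic_borel[OF p])
    then show ?thesis by simp
  qed
  also have "\<dots> = sigma_sets (padic p \<times> padic p) {a \<times> b | a b. a \<in> ?C \<and> b \<in> ?C}"
    by (rule sets_measure_of) (use cyl_sub in blast)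
  also have "\<dots> = sigma_sets (padic p \<times> padic p) (gen2 p)"
  proof (rule sigma_sets_eqI)
    fix a assume "a \<in> {a \<times> b | a b. a \<in> ?C \<and> b \<in> ?C}"
    then obtain n r m s where a: "a = cyl p n r \<times> cyl p m s" by auto
    show "a \<in> sigma_sets (padic p \<times> padic p) (gen2 p)"
    proof (cases "n \<le> m")
      case True
      have "a = \<Union>((\<lambda>t. cyl p m t \<times> cyl p m s) ` {t. t mod int p ^ n = r})"
        unfolding a cyl_lift[OF True, of p r] by auto
      also have "\<dots> \<in> sigma_sets (padic p \<times> padic p) (gen2 p)"
        by (intro sigma_sets_UNION countable_image countableI_type sigma_sets.Basic) (auto simp: gen2_def)
      finally show ?thesis .
    next
      case False
      then have "m \<le> n" by simp
      have "a = \<Union>((\<lambda>t. cyl p n r \<times> cyl p n t) ` {t. t mod int p ^ m = s})"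
        unfolding a cyl_lift[OF \<open>m \<le> n\<close>, of p s] by auto
      also have "\<dots> \<in> sigma_sets (padic p \<times> padic p) (gen2 p)"
        by (intro sigma_sets_UNION countable_image countableI_type sigma_sets.Basic) (auto simp: gen2_def)
      finally show ?thesis .
    qed
  next
    fix b assume "b \<in> gen2 p"
    then show "b \<in> sigma_sets (padic p \<times> padic p) {a \<times> b | a b. a \<in> ?C \<and> b \<in> ?C}"
      by (auto simp: gen2_def intro!: sigma_sets.Basic)
  qed
  finally show ?thesis .
qed

lemma measure_eq_padic2:
  assumes p: "p > 0"
    and N1: "finite_measure N1" "sets N1 = sets (padic_borel p \<Otimes>\<^sub>M padic_borel p)"
    and N2: "sets N2 = sets (padic_borel p \<Otimes>\<^sub>M padic_borel p)"
    and eq: "\<And>n r s. emeasure N1 (cyl p n r \<times> cyl p n s) = emeasure N2 (cyl p n r \<times> cyl p n s)"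
  shows "N1 = N2"
proof (rule measure_eqI_generator_eq[OF gen2_Int_stable gen2_sub])
  show "\<And>X. X \<in> gen2 p \<Longrightarrow> emeasure N1 X = emeasure N2 X" using eq by (auto simp: gen2_def)
  show "sets N1 = sigma_sets (padic p \<times> padic p) (gen2 p)" using N1 sets_pair_padic[OF p] by simp
  show "sets N2 = sigma_sets (padic p \<times> padic p) (gen2 p)" using N2 sets_pair_padic[OF p] by simp
  show "range (\<lambda>i. cyl p 0 0 \<times> cyl p 0 0) \<subseteq> gen2 p" by (auto simp: gen2_def)
  show "(\<Union>i. cyl p 0 0 \<times> cyl p 0 0) = padic p \<times> padic p" by (simp add: cyl_0)
  show "\<And>i. emeasure N1 (cyl p 0 0 \<times> cyl p 0 0) \<noteq> \<infinity>"
    using finite_measure.emeasure_finite[OF N1(1)] by simp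
qed



definition dig :: "nat \<Rightarrow> (nat \<Rightarrow> int) \<Rightarrow> nat \<Rightarrow> int" where
  "dig p \<omega> n = (\<Sum>i<n. (\<omega> i mod int p) * int p ^ i)"

lemma dig_Suc: "dig p \<omega> (Suc n) = dig p \<omega> n + (\<omega> n mod int p) * int p ^ n"
  by (simp add: dig_def)

lemma dig_range: "p > 0 \<Longrightarrow> 0 \<le> dig p \<omega> n \<and> dig p \<omega> n < int p ^ n"
proof (induction n)
  case 0 then show ?case by (simp add: dig_def)
next
  case (Suc n)
  have d: "0 \<le> \<omega> n mod int p" "\<omega> n mod int p \<le> int p - 1" using Suc.prems by auto
  have "(\<omega> n mod int p) * int p ^ n \<le> (int p - 1) * int p ^ n"
    using d by (intro mult_right_mono) auto
  then show ?case using Suc d by (auto simp: dig_Suc algebra_simps)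
qed

lemma dig_padic: "p > 0 \<Longrightarrow> dig p \<omega> \<in> padic p"
proof -
  assume p: "p > 0"
  have "dig p \<omega> (Suc n) mod int p ^ n = dig p \<omega> n" for n
    using dig_range[OF p, of \<omega> n] by (simp add: dig_Suc)
  then show ?thesis using dig_range[OF p] by (simp add: padic_def)
qed

lemma mod_div_digit:
  fixes r :: int
  assumes "i < n" "(q::int) > 0"
  shows "((r mod q ^ n) div q ^ i) mod q = (r div q ^ i) mod q"
proof -
  obtain k where n: "n = i + Suc k" using assms(1) by (metis less_iff_Suc_add add_Suc_right)
  have "r mod q ^ n = q ^ i * ((r div q ^ i) mod q ^ Suc k) + r mod q ^ i"
    unfolding n power_add by (rule zmod_zmult2_eq) (use assms(2) in simp)
  then have "(r mod q ^ n) div q ^ i = (r div q ^ i) mod q ^ Suc k"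
    using assms(2) by simp
  then show ?thesis
    by (simp add: mod_mod_cancel)
qed

lemma dig_eq_iff:
  assumes p: "p > 0"
  shows "0 \<le> r \<Longrightarrow> r < int p ^ n \<Longrightarrow>
    dig p \<omega> n = r \<longleftrightarrow> (\<forall>i<n. \<omega> i mod int p = (r div int p ^ i) mod int p)"
proof (induction n arbitrary: r)
  case 0 then show ?case by (simp add: dig_def)
next
  case (Suc n)
  let ?d = "\<omega> n mod int p" and ?q = "int p ^ n"
  have q: "?q > 0" using p by simp
  have d: "0 \<le> ?d" "?d < int p" using p by auto
  have D: "0 \<le> dig p \<omega> n" "dig p \<omega> n < ?q" using dig_range[OF p] by auto
  have rq1: "0 \<le> r div ?q" using Suc.prems q by (simp add: pos_imp_zdiv_nonneg_iff)
  have "?q * (r div ?q) \<le> r"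
    using mult_div_mod_eq[of ?q r] pos_mod_sign[OF q, of r] by linarith
  also have "r < ?q * int p" using Suc.prems by (simp add: mult.commute)
  finally have "r div ?q < int p" using q by (simp add: mult_less_cancel_left_pos)
  note rq = rq1 this
  have "dig p \<omega> (Suc n) = r \<longleftrightarrow> dig p \<omega> n = r mod ?q \<and> ?d = r div ?q"
  proof
    assume e: "dig p \<omega> (Suc n) = r"
    then have "r = ?d * ?q + dig p \<omega> n" by (simp add: dig_Suc)
    then show "dig p \<omega> n = r mod ?q \<and> ?d = r div ?q" using D q by simp
  next
    assume "dig p \<omega> n = r mod ?q \<and> ?d = r div ?q"
    then show "dig p \<omega> (Suc n) = r" by (simp add: dig_Suc mult.commute)
  qed
  also have "\<dots> \<longleftrightarrow> (\<forall>i<n. \<omega> i mod int p = ((r mod ?q) div int p ^ i) mod int p) \<and> ?d = r div ?q"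
    using Suc.IH[of "r mod ?q"] q by simp
  also have "\<dots> \<longleftrightarrow> (\<forall>i<n. \<omega> i mod int p = (r div int p ^ i) mod int p) \<and> ?d = (r div ?q) mod int p"
    using mod_div_digit[of _ n "int p" r] p rq by simp
  also have "\<dots> \<longleftrightarrow> (\<forall>i<Suc n. \<omega> i mod int p = (r div int p ^ i) mod int p)"
    by (auto simp: less_Suc_eq)
  finally show ?case .
qed

definition digM :: "nat \<Rightarrow> (nat \<Rightarrow> int) measure" where
  "digM p = PiM UNIV (\<lambda>_. measure_pmf (pmf_of_set {0..<int p}))"

lemma prob_digM: "p > 0 \<Longrightarrow> prob_space (digM p)"
  unfolding digM_def by (rule prob_space_PiM) (rule prob_space_measure_pmf)

lemma space_digM [simp]: "space (digM p) = UNIV"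
  by (simp add: digM_def space_PiM)

lemma meas_comp_cs:
  "g \<in> M \<rightarrow>\<^sub>M count_space UNIV \<Longrightarrow> (\<lambda>\<omega>. h (g \<omega>)) \<in> M \<rightarrow>\<^sub>M count_space UNIV"
  by (rule measurable_comp[where f = g and g = h, unfolded comp_def])
    (assumption, rule measurable_count_space_eq1[THEN iffD2], simp)

lemma meas_digM_coord: "(\<lambda>\<omega>. \<omega> i) \<in> digM p \<rightarrow>\<^sub>M count_space (UNIV :: int set)"
proof -
  have "(\<lambda>\<omega>. \<omega> i) \<in> digM p \<rightarrow>\<^sub>M measure_pmf (pmf_of_set {0..<int p})"
    unfolding digM_def by (rule measurable_component_singleton) simp
  then show ?thesis by (subst measurable_cong_sets[OF refl, where N' = "measure_pmf (pmf_of_set {0..<int p})"]) simp_all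
qed

lemma meas_dig: "(\<lambda>\<omega>. dig p \<omega> n) \<in> digM p \<rightarrow>\<^sub>M count_space UNIV"
proof (induction n)
  case 0 then show ?case by (simp add: dig_def)
next
  case (Suc n)
  have "(\<lambda>\<omega>. (\<lambda>i \<omega>. i + (\<omega> n mod int p) * int p ^ n) (dig p \<omega> n) \<omega>) \<in> digM p \<rightarrow>\<^sub>M count_space UNIV"
    by (rule measurable_compose_countable[OF _ Suc.IH])
      (rule meas_comp_cs[OF meas_digM_coord, of "\<lambda>v. _ + (v mod int p) * int p ^ n"])
  then show ?case by (simp add: dig_Suc)
qed

lemma meas_dig_padic: "p > 0 \<Longrightarrow> dig p \<in> digM p \<rightarrow>\<^sub>M padic_borel p"
  by (rule measurable_padic) (auto simp: dig_padic meas_dig)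

definition haar :: "nat \<Rightarrow> (nat \<Rightarrow> int) measure" where
  "haar p = distr (digM p) (padic_borel p) (dig p)"

lemma prob_haar: "p > 0 \<Longrightarrow> prob_space (haar p)"
  unfolding haar_def by (intro prob_space.prob_space_distr prob_digM meas_dig_padic)

lemma sets_haar [simp]: "sets (haar p) = sets (padic_borel p)"
  by (simp add: haar_def)

lemma space_haar [simp]: "space (haar p) = padic p"
  by (simp add: haar_def)

lemma haar_cyl:
  assumes p: "p > 0" and r: "0 \<le> r" "r < int p ^ n"
  shows "emeasure (haar p) (cyl p n r) = ennreal (1 / real p ^ n)"
proof -
  let ?M = "\<lambda>_::nat. measure_pmf (pmf_of_set {0..<int p})"
  let ?A = "\<lambda>i. {x::int. x mod int p = (r div int p ^ i) mod int p}"
  have "emeasure (haar p) (cyl p n r) = emeasure (digM p) (dig p -` cyl p n r \<inter> space (digM p))"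
    unfolding haar_def by (rule emeasure_distr[OF meas_dig_padic[OF p] cyl_sets[OF p]])
  also have "dig p -` cyl p n r \<inter> space (digM p) = prod_emb UNIV ?M {..<n} (Pi\<^sub>E {..<n} ?A)"
    using dig_eq_iff[OF p r] dig_padic[OF p]
    by (auto simp: cyl_def prod_emb_def space_PiM PiE_def Pi_def)
  also have "emeasure (digM p) \<dots> = (\<Prod>i<n. emeasure (?M i) (?A i))"
    unfolding digM_def by (rule emeasure_PiM_emb) (auto simp add: prob_space_measure_pmf)
  also have "\<dots> = (\<Prod>i<n. ennreal (1 / real p))"
  proof (rule prod.cong[OF refl])
    fix i
    let ?e = "(r div int p ^ i) mod int p"
    have "{0..<int p} \<inter> ?A i = {?e}" using p by auto
    then show "emeasure (?M i) (?A i) = ennreal (1 / real p)"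
      using p by (subst emeasure_pmf_of_set) (auto simp: divide_ennreal ennreal_of_nat_eq_real_of_nat)
  qed
  also have "\<dots> = ennreal (1 / real p ^ n)"
    using ennreal_power[of "1 / real p" n] by (simp add: power_one_over)
  finally show ?thesis .
qed



definition lin :: "nat \<Rightarrow> int \<Rightarrow> int \<Rightarrow> (nat \<Rightarrow> int) \<Rightarrow> (nat \<Rightarrow> int) \<Rightarrow> (nat \<Rightarrow> int)" where
  "lin p a b x y = (\<lambda>n. (a * x n + b * y n) mod int p ^ n)"

lemma lin_padic:
  assumes p: "p > 0" and x: "x \<in> padic p" and y: "y \<in> padic p"
  shows "lin p a b x y \<in> padic p"
proof -
  have "(a * x (Suc n) + b * y (Suc n)) mod int p ^ Suc n mod int p ^ n = (a * x n + b * y n) mod int p ^ n" for n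
  proof -
    have dv: "int p ^ n dvd int p ^ Suc n" by (simp add: le_imp_power_dvd)
    have "(a * x (Suc n) + b * y (Suc n)) mod int p ^ Suc n mod int p ^ n
        = (a * x (Suc n) + b * y (Suc n)) mod int p ^ n" using dv by (simp add: mod_mod_cancel)
    also have "\<dots> = (a * (x (Suc n) mod int p ^ n) + b * (y (Suc n) mod int p ^ n)) mod int p ^ n"
      by (rule mod_add_cong) (simp_all add: mod_mult_right_eq)
    also have "\<dots> = (a * x n + b * y n) mod int p ^ n"
      using padic_compat[OF x] padic_compat[OF y] by simp
    finally show ?thesis .
  qed
  then show ?thesis using p by (simp add: padic_def lin_def)
qed

lemma lin_apply: "lin p a b x y n = (a * x n + b * y n) mod int p ^ n"
  by (simp add: lin_def)

lemma meas_lin: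
  assumes p: "p > 0" and f: "f \<in> M \<rightarrow>\<^sub>M padic_borel p" and g: "g \<in> M \<rightarrow>\<^sub>M padic_borel p"
  shows "(\<lambda>\<omega>. lin p a b (f \<omega>) (g \<omega>)) \<in> M \<rightarrow>\<^sub>M padic_borel p"
proof (rule measurable_padic[OF p])
  show "(\<lambda>\<omega>. lin p a b (f \<omega>) (g \<omega>)) \<in> space M \<rightarrow> padic p"
    using measurable_space[OF f] measurable_space[OF g] lin_padic[OF p] by auto
  fix n
  have f': "(\<lambda>\<omega>. f \<omega> n) \<in> M \<rightarrow>\<^sub>M count_space UNIV"
    using measurable_comp[OF f measurable_coord[OF p, of n]] by (simp add: comp_def)
  have g': "(\<lambda>\<omega>. g \<omega> n) \<in> M \<rightarrow>\<^sub>M count_space UNIV"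
    using measurable_comp[OF g measurable_coord[OF p, of n]] by (simp add: comp_def)
  have "(\<lambda>\<omega>. (\<lambda>i \<omega>. (a * i + b * g \<omega> n) mod int p ^ n) (f \<omega> n) \<omega>) \<in> M \<rightarrow>\<^sub>M count_space UNIV"
    by (rule measurable_compose_countable[OF _ f'])
      (rule meas_comp_cs[OF g', of "\<lambda>v. (a * _ + b * v) mod int p ^ n"])
  then show "(\<lambda>\<omega>. lin p a b (f \<omega>) (g \<omega>) n) \<in> M \<rightarrow>\<^sub>M count_space UNIV"
    by (simp add: lin_def)
qed

lemma padic_add_lin: "padic_add p k x = lin p 1 1 k x"
  by (simp add: padic_add_def lin_def)

lemma L1_lin: "padic_add p (padic_smul p (int p) x) (padic_neg p y) = lin p (int p) (-1) x y"
  unfolding padic_add_def padic_smul_def padic_neg_def lin_def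
  by (rule ext, subst mod_add_eq) simp

lemma L2_lin: "padic_add p x (padic_smul p (int p) y) = lin p 1 (int p) x y"
  unfolding padic_add_def padic_smul_def lin_def
  by (rule ext, subst mod_add_right_eq) simp

lemma L2n_lin: "padic_neg p (padic_add p x (padic_smul p (int p) y)) = lin p (-1) (- int p) x y"
proof -
  have "(- ((x n + int p * y n mod int p ^ n) mod int p ^ n)) mod int p ^ n
      = (- 1 * x n + - int p * y n) mod int p ^ n" for n
    by (subst mod_add_right_eq, subst mod_minus_eq) simp
  then show ?thesis by (simp add: padic_add_def padic_smul_def padic_neg_def lin_def)
qed

definition wt :: "nat \<Rightarrow> int \<Rightarrow> real" where
  "wt p r = (if r = 0 then real p / 4 else 3 * real p / (4 * (real p - 1)))"

lemma wt_nonneg: "p > 1 \<Longrightarrow> wt p r \<ge> 0"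
  by (simp add: wt_def)

definition mu :: "nat \<Rightarrow> (nat \<Rightarrow> int) measure" where
  "mu p = density (haar p) (\<lambda>x. ennreal (wt p (x 1)))"

lemma wt_meas: "p > 0 \<Longrightarrow> (\<lambda>x. ennreal (wt p (x 1))) \<in> borel_measurable (haar p)"
proof -
  assume p: "p > 0"
  have "(\<lambda>x. x 1) \<in> haar p \<rightarrow>\<^sub>M count_space UNIV"
    using measurable_coord[OF p, of 1] by (subst measurable_cong_sets[OF sets_haar refl])
  then show ?thesis
    by (rule measurable_comp[where g = "\<lambda>v. ennreal (wt p v)", unfolded comp_def])
      (rule measurable_count_space_eq1[THEN iffD2], simp)
qed

lemma sets_mu [simp]: "sets (mu p) = sets (padic_borel p)"
  by (simp add: mu_def)

lemma space_mu [simp]: "space (mu p) = padic p"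
  by (simp add: mu_def)

lemma mu_cyl:
  assumes p: "p > 1" and n: "n \<ge> 1" and a: "0 \<le> a" "a < int p ^ n"
  shows "emeasure (mu p) (cyl p n a) = ennreal (wt p (a mod int p) / real p ^ n)"
proof -
  have p0: "p > 0" using p by simp
  have "emeasure (mu p) (cyl p n a) = (\<integral>\<^sup>+ x. ennreal (wt p (x 1)) * indicator (cyl p n a) x \<partial>haar p)"
    unfolding mu_def by (rule emeasure_density[OF wt_meas[OF p0]]) (simp add: cyl_sets[OF p0])
  also have "\<dots> = (\<integral>\<^sup>+ x. ennreal (wt p (a mod int p)) * indicator (cyl p n a) x \<partial>haar p)"
  proof (rule nn_integral_cong)
    fix x assume "x \<in> space (haar p)"
    show "ennreal (wt p (x 1)) * indicator (cyl p n a) x = ennreal (wt p (a mod int p)) * indicator (cyl p n a) x"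
    proof (cases "x \<in> cyl p n a")
      case True
      then have "x \<in> padic p" "x n = a" by (auto simp: cyl_def)
      then have "x 1 = a mod int p" using padic_mod[of x p 1 n] n by simp
      then show ?thesis by simp
    qed simp
  qed
  also have "\<dots> = ennreal (wt p (a mod int p)) * emeasure (haar p) (cyl p n a)"
    by (rule nn_integral_cmult_indicator) (simp add: cyl_sets[OF p0])
  also have "\<dots> = ennreal (wt p (a mod int p)) * ennreal (1 / real p ^ n)"
    using haar_cyl[OF p0 a] by simp
  also have "\<dots> = ennreal (wt p (a mod int p) / real p ^ n)"
    using wt_nonneg[OF p] by (simp add: ennreal_mult[symmetric])
  finally show ?thesis .
qed

lemma mu_cyl1:
  assumes p: "p > 1"
  shows "emeasure (mu p) (cyl p 1 r) =
    ennreal (if r = 0 then 1/4 else if 0 < r \<and> r < int p then 3 / (4 * (real p - 1)) else 0)"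
proof (cases "0 \<le> r \<and> r < int p")
  case True
  then show ?thesis using mu_cyl[OF p, of 1 r] p by (auto simp: wt_def)
next
  case False
  then have "cyl p 1 r = {}" using padic_range[of _ p 1] by (auto simp: cyl_def)
  then show ?thesis using False p by auto
qed

lemma prob_mu:
  assumes p: "p > 1"
  shows "prob_space (mu p)"
proof (rule prob_spaceI)
  have p0: "p > 0" using p by simp
  have U: "padic p = (\<Union>r\<in>{0..<int p}. cyl p 1 r)"
    using padic_range[of _ p 1] by (auto simp: cyl_def)
  have "emeasure (mu p) (padic p) = (\<Sum>r\<in>{0..<int p}. emeasure (mu p) (cyl p 1 r))"
    unfolding U
    apply (rule sum_emeasure[symmetric])
    using cyl_sets[OF p0] apply (simp add: image_subset_iff)
     apply (auto simp: disjoint_family_on_def cyl_def)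
    done
  also have "\<dots> = (\<Sum>r\<in>{0..<int p}. ennreal (if r = 0 then 1/4 else 3 / (4 * (real p - 1))))"
  proof (rule sum.cong[OF refl])
    fix r assume "r \<in> {0..<int p}"
    then show "emeasure (mu p) (cyl p 1 r) = ennreal (if r = 0 then 1/4 else 3 / (4 * (real p - 1)))"
      unfolding mu_cyl1[OF p] by auto
  qed
  also have "\<dots> = ennreal (\<Sum>r\<in>{0..<int p}. (if r = 0 then 1/4 else 3 / (4 * (real p - 1))))"
    using p by (subst sum_ennreal) auto
  also have "(\<Sum>r\<in>{0..<int p}. (if r = 0 then 1/4 else 3 / (4 * (real p - 1)))) = (1::real)"
  proof -
    have "{0..<int p} = insert 0 {1..<int p}" using p by auto
    then have "(\<Sum>r\<in>{0..<int p}. (if r = 0 then 1/4 else 3 / (4 * (real p - 1))))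
        = 1/4 + (\<Sum>r\<in>{1..<int p}. (3 / (4 * (real p - 1)) :: real))"
      by (simp add: sum.insert)
    also have "\<dots> = 1/4 + real (p - 1) * (3 / (4 * (real p - 1)))" using p by (simp add: nat_diff_distrib)
    also have "\<dots> = 1" using p by (simp add: of_nat_diff field_simps)
    finally show ?thesis .
  qed
  finally show "emeasure (mu p) (space (mu p)) = 1" by simp
qed



lemma padic_add_eta: "padic_add p k = (\<lambda>x. lin p 1 1 k x)"
  by (rule ext) (simp add: padic_add_lin)

lemma meas_add:
  assumes p: "p > 0" and k: "k \<in> padic p"
  shows "padic_add p k \<in> padic_borel p \<rightarrow>\<^sub>M padic_borel p"
  unfolding padic_add_eta
  by (rule meas_lin[OF p]) (use k in simp_all)

lemma prime4: "\<not> prime (4::nat)"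
  using prime_product[of 2 2] by simp

lemma not_I:
  assumes pr: "prime p"
  shows "\<not> padic_I p (mu p)"
proof
  have p: "p > 1" using pr prime_gt_1_nat by blast
  then have p0: "p > 0" by simp
  let ?P = "padic_borel p"
  assume "padic_I p (mu p)"
  then obtain K \<nu> a where K: "padic_compact_subgroup p K" and H: "padic_haar p K \<nu>"
    and a: "a \<in> padic p" and mu_eq: "mu p = distr \<nu> ?P (padic_add p a)"
    by (auto simp: padic_I_def)
  have Ksub: "K \<subseteq> padic p" using K by (simp add: padic_compact_subgroup_def)
  have sets_nu: "sets \<nu> = sets ?P" and K1: "emeasure \<nu> K = 1" and inv: "\<And>k. k \<in> K \<Longrightarrow> distr \<nu> ?P (padic_add p k) = \<nu>"
    using H by (auto simp: padic_haar_def)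
  have space_nu: "space \<nu> = padic p" using sets_eq_imp_space_eq[OF sets_nu] by simp
  have addnu: "padic_add p k \<in> \<nu> \<rightarrow>\<^sub>M ?P" if "k \<in> padic p" for k
    using meas_add[OF p0 that] by (subst measurable_cong_sets[OF sets_nu refl])
  have addmu: "padic_add p k \<in> mu p \<rightarrow>\<^sub>M ?P" if "k \<in> padic p" for k
    using meas_add[OF p0 that] by (subst measurable_cong_sets[OF sets_mu refl])
  show False
  proof (cases "\<exists>k\<in>K. k 1 \<noteq> 0")
    case True
    then obtain k where k: "k \<in> K" "k 1 \<noteq> 0" by blast
    have kp: "k \<in> padic p" using k Ksub by auto
    have comm: "padic_add p k \<circ> padic_add p a = padic_add p a \<circ> padic_add p k"
      by (rule ext) (simp add: padic_add_def mod_add_right_eq add.left_commute)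
    have "distr (mu p) ?P (padic_add p k) = distr \<nu> ?P (padic_add p k \<circ> padic_add p a)"
      unfolding mu_eq by (rule distr_distr[OF meas_add[OF p0 kp] addnu[OF a]])
    also have "\<dots> = distr \<nu> ?P (padic_add p a \<circ> padic_add p k)" by (simp add: comm)
    also have "\<dots> = distr (distr \<nu> ?P (padic_add p k)) ?P (padic_add p a)"
      by (rule distr_distr[symmetric, OF meas_add[OF p0 a] addnu[OF kp]])
    also have "\<dots> = mu p" using inv[OF k(1)] mu_eq by simp
    finally have inv_mu: "distr (mu p) ?P (padic_add p k) = mu p" .
    define t where "t = (- k 1) mod int p"
    have k1: "0 \<le> k 1" "k 1 < int p" using padic_range[OF kp, of 1] by auto
    have t: "0 < t" "t < int p"
    proof -
      have "0 \<le> t" "t < int p" using p by (auto simp: t_def)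
      moreover have "t \<noteq> 0"
      proof
        assume "t = 0"
        then have "int p dvd k 1" by (simp add: t_def mod_eq_0_iff_dvd)
        then have "int p \<le> k 1" using k(2) k1 by (simp add: zdvd_imp_le)
        then show False using k1 by simp
      qed
      ultimately show "0 < t" "t < int p" by auto
    qed
    have pre: "padic_add p k -` cyl p 1 0 \<inter> space (mu p) = cyl p 1 t"
    proof (rule set_eqI, rule iffI)
      fix x assume "x \<in> padic_add p k -` cyl p 1 0 \<inter> space (mu p)"
      then have x: "x \<in> padic p" "(k 1 + x 1) mod int p = 0" by (auto simp: cyl_def padic_add_def)
      then have "int p dvd x 1 - (- k 1)" by (simp add: mod_eq_0_iff_dvd add.commute)
      then have "x 1 mod int p = t" unfolding t_def by (simp add: mod_eq_dvd_iff)
      then show "x \<in> cyl p 1 t" using x padic_range[OF x(1), of 1] by (simp add: cyl_def)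
    next
      fix x assume "x \<in> cyl p 1 t"
      then have x: "x \<in> padic p" "x 1 = t" by (auto simp: cyl_def)
      have "x 1 mod int p = (- k 1) mod int p" using x t by (simp add: t_def)
      then have "int p dvd x 1 - (- k 1)" by (simp add: mod_eq_dvd_iff)
      then have "(k 1 + x 1) mod int p = 0" by (simp add: mod_eq_0_iff_dvd add.commute)
      moreover have "padic_add p k x \<in> padic p" using lin_padic[OF p0 kp x(1)] by (simp add: padic_add_lin padic_add_eta)
      ultimately show "x \<in> padic_add p k -` cyl p 1 0 \<inter> space (mu p)"
        using x by (simp add: cyl_def padic_add_def)
    qed
    have "emeasure (mu p) (cyl p 1 0) = emeasure (distr (mu p) ?P (padic_add p k)) (cyl p 1 0)"
      using inv_mu by simp
    also have "\<dots> = emeasure (mu p) (cyl p 1 t)"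
      by (subst emeasure_distr[OF addmu[OF kp] cyl_sets[OF p0]]) (use pre in simp)
    finally have eq: "emeasure (mu p) (cyl p 1 0) = emeasure (mu p) (cyl p 1 t)" .
    have "ennreal (1/4) = ennreal (3 / (4 * (real p - 1)))"
      using eq t unfolding mu_cyl1[OF p] by simp
    then have "(1/4::real) = 3 / (4 * (real p - 1))" using p by (subst (asm) ennreal_inj) auto
    then have "real p = 4" using p by (simp add: field_simps)
    then have "p = 4" by simp
    then show False using pr prime4 by simp
  next
    case False
    then have K0: "\<And>k. k \<in> K \<Longrightarrow> k 1 = 0" by blast
    have a1: "0 \<le> a 1" "a 1 < int p" using padic_range[OF a, of 1] by auto
    have sub: "K \<subseteq> padic_add p a -` cyl p 1 (a 1) \<inter> space \<nu>"
    proof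
      fix k assume k: "k \<in> K"
      then have kp: "k \<in> padic p" using Ksub by auto
      have "padic_add p a k \<in> padic p" using lin_padic[OF p0 a kp] by (simp add: padic_add_lin)
      moreover have "padic_add p a k 1 = a 1" using K0[OF k] a1 by (simp add: padic_add_def)
      ultimately show "k \<in> padic_add p a -` cyl p 1 (a 1) \<inter> space \<nu>"
        using kp by (simp add: cyl_def space_nu)
    qed
    have "1 = emeasure \<nu> K" using K1 by simp
    also have "\<dots> \<le> emeasure \<nu> (padic_add p a -` cyl p 1 (a 1) \<inter> space \<nu>)"
      by (rule emeasure_mono[OF sub measurable_sets[OF addnu[OF a] cyl_sets[OF p0]]])
    also have "\<dots> = emeasure (mu p) (cyl p 1 (a 1))"
      unfolding mu_eq by (rule emeasure_distr[symmetric, OF addnu[OF a] cyl_sets[OF p0]])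
    also have "\<dots> = ennreal (if a 1 = 0 then 1/4 else if 0 < a 1 \<and> a 1 < int p then 3 / (4 * (real p - 1)) else 0)"
      by (rule mu_cyl1[OF p])
    finally have le: "ennreal 1 \<le> ennreal (if a 1 = 0 then 1/4 else if 0 < a 1 \<and> a 1 < int p then 3 / (4 * (real p - 1)) else 0)"
      by simp
    have "3 / (4 * (real p - 1)) \<le> 3/4" using p by (simp add: field_simps)
    then show False using le p by (auto split: if_splits)
  qed
qed



lemma coprime_q: "coprime (int p ^ n) (int p * int p + 1)"
proof -
  have "coprime (int p * int p) (int p * int p + 1)" by (rule coprime_add_one_right)
  then have "coprime (int p) (int p * int p + 1)" using coprime_mult_left_iff by blast
  then show ?thesis by simp
qed

lemma in_range_eq:
  fixes q x x' :: int
  assumes "0 \<le> x" "x < q" "0 \<le> x'" "x' < q" "q dvd x - x'"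
  shows "x = x'"
proof -
  have "x mod q = x' mod q" using assms(5) by (simp add: mod_eq_dvd_iff)
  then show ?thesis using assms by simp
qed

lemma Phi_inj:
  fixes p n :: nat and x y x' y' :: int
  defines "q \<equiv> int p ^ n"
  assumes r: "0 \<le> x" "x < q" "0 \<le> y" "y < q" "0 \<le> x'" "x' < q" "0 \<le> y'" "y' < q"
    and e1: "(int p * x - y) mod q = (int p * x' - y') mod q"
    and e2: "(x + int p * y) mod q = (x' + int p * y') mod q"
  shows "x = x' \<and> y = y'"
proof -
  have d1: "q dvd (int p * x - y) - (int p * x' - y')" using e1 by (simp add: mod_eq_dvd_iff)
  have d2: "q dvd (x + int p * y) - (x' + int p * y')" using e2 by (simp add: mod_eq_dvd_iff)
  have "(int p * int p + 1) * (x - x') = int p * ((int p * x - y) - (int p * x' - y')) + ((x + int p * y) - (x' + int p * y'))"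
    by (simp add: algebra_simps)
  then have "q dvd (int p * int p + 1) * (x - x')" using d1 d2 by (simp add: dvd_add dvd_mult)
  then have "q dvd x - x'" using coprime_q[of p n] unfolding q_def
    by (simp add: coprime_dvd_mult_right_iff)
  then have xx: "x = x'" using r by (intro in_range_eq[of x q x']) auto
  then have "q dvd y' - y" using d1 by (simp add: algebra_simps)
  then have "y' = y" using r by (intro in_range_eq[of y' q y]) auto
  then show ?thesis using xx by simp
qed

lemma Phi_solve:
  fixes p n :: nat and r s :: int
  defines "q \<equiv> int p ^ n"
  assumes p: "p > 0" and rs: "0 \<le> r" "r < q" "0 \<le> s" "s < q"
  shows "\<exists>a b. 0 \<le> a \<and> a < q \<and> 0 \<le> b \<and> b < q \<and> (int p * a - b) mod q = r \<and> (a + int p * b) mod q = s"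
proof -
  let ?S = "{0..<q} \<times> {0..<q}"
  let ?F = "\<lambda>(x, y). ((int p * x - y) mod q, (x + int p * y) mod q)"
  have q: "q > 0" using p by (simp add: q_def)
  have "inj_on ?F ?S"
    by (rule inj_onI) (use Phi_inj[of _ p n] in \<open>auto simp: q_def\<close>)
  moreover have "?F ` ?S \<subseteq> ?S" using q by auto
  ultimately have "?F ` ?S = ?S" by (intro endo_inj_surj) auto
  moreover have "(r, s) \<in> ?S" using rs by auto
  ultimately have "(r, s) \<in> ?F ` ?S" by simp
  then obtain z where z: "z \<in> ?S" "(r, s) = ?F z" by blast
  obtain a b where ab: "z = (a, b)" by (cases z)
  show ?thesis using z unfolding ab by auto
qed

lemma pdvd_modq:
  fixes z :: int
  assumes "n \<ge> 1"
  shows "int p dvd z mod int p ^ n \<longleftrightarrow> int p dvd z"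
proof -
  have "int p dvd int p ^ n" using assms by (simp add: dvd_power)
  then show ?thesis by (simp add: dvd_eq_mod_eq_0 mod_mod_cancel)
qed

lemma wt_cong: "(x mod int p = 0 \<longleftrightarrow> y mod int p = 0) \<Longrightarrow> wt p (x mod int p) = wt p (y mod int p)"
  by (simp add: wt_def)

definition FF :: "nat \<Rightarrow> (nat \<Rightarrow> int) \<times> (nat \<Rightarrow> int) \<Rightarrow> (nat \<Rightarrow> int) \<times> (nat \<Rightarrow> int)" where
  "FF p \<omega> = (lin p (int p) (-1) (fst \<omega>) (snd \<omega>), lin p 1 (int p) (fst \<omega>) (snd \<omega>))"

definition GG :: "nat \<Rightarrow> (nat \<Rightarrow> int) \<times> (nat \<Rightarrow> int) \<Rightarrow> (nat \<Rightarrow> int) \<times> (nat \<Rightarrow> int)" where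
  "GG p \<omega> = (lin p (int p) (-1) (fst \<omega>) (snd \<omega>), lin p (-1) (- int p) (fst \<omega>) (snd \<omega>))"

lemma meas_fst_mu: "fst \<in> (mu p \<Otimes>\<^sub>M mu p) \<rightarrow>\<^sub>M padic_borel p"
  using measurable_fst[of "mu p" "mu p"] by (subst measurable_cong_sets[OF refl sets_mu[symmetric]])

lemma meas_snd_mu: "snd \<in> (mu p \<Otimes>\<^sub>M mu p) \<rightarrow>\<^sub>M padic_borel p"
  using measurable_snd[of "mu p" "mu p"] by (subst measurable_cong_sets[OF refl sets_mu[symmetric]])

lemma meas_FF: "p > 0 \<Longrightarrow> FF p \<in> (mu p \<Otimes>\<^sub>M mu p) \<rightarrow>\<^sub>M padic_borel p \<Otimes>\<^sub>M padic_borel p"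
  unfolding FF_def by (intro measurable_Pair meas_lin meas_fst_mu meas_snd_mu)

lemma meas_GG: "p > 0 \<Longrightarrow> GG p \<in> (mu p \<Otimes>\<^sub>M mu p) \<rightarrow>\<^sub>M padic_borel p \<Otimes>\<^sub>M padic_borel p"
  unfolding GG_def by (intro measurable_Pair meas_lin meas_fst_mu meas_snd_mu)

lemma pre_FF:
  assumes p: "p > 0" and sol: "0 \<le> a" "a < int p ^ n" "0 \<le> b" "b < int p ^ n"
    "(int p * a - b) mod int p ^ n = r" "(a + int p * b) mod int p ^ n = s"
  shows "FF p -` (cyl p n r \<times> cyl p n s) \<inter> space (mu p \<Otimes>\<^sub>M mu p) = cyl p n a \<times> cyl p n b"
proof (rule set_eqI)
  fix z :: "(nat \<Rightarrow> int) \<times> (nat \<Rightarrow> int)"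
  obtain x y where z: "z = (x, y)" by (cases z)
  show "z \<in> FF p -` (cyl p n r \<times> cyl p n s) \<inter> space (mu p \<Otimes>\<^sub>M mu p) \<longleftrightarrow> z \<in> cyl p n a \<times> cyl p n b"
  proof (cases "x \<in> padic p \<and> y \<in> padic p")
    case True
    then have xy: "x \<in> padic p" "y \<in> padic p" by auto
    have "z \<in> FF p -` (cyl p n r \<times> cyl p n s) \<inter> space (mu p \<Otimes>\<^sub>M mu p) \<longleftrightarrow>
        (int p * x n - y n) mod int p ^ n = r \<and> (x n + int p * y n) mod int p ^ n = s"
      using lin_padic[OF p xy] by (simp add: z FF_def cyl_def space_pair_measure xy lin_apply)
    also have "\<dots> \<longleftrightarrow> x n = a \<and> y n = b"
      using Phi_inj[of "x n" p n "y n" a b] padic_range[OF xy(1), of n] padic_range[OF xy(2), of n] sol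
      by auto
    also have "\<dots> \<longleftrightarrow> z \<in> cyl p n a \<times> cyl p n b" using xy by (simp add: z cyl_def)
    finally show ?thesis .
  next
    case False
    then show ?thesis by (auto simp: z cyl_def space_pair_measure)
  qed
qed

lemma GG_pre:
  assumes s: "0 \<le> s" "s < int p ^ n" and p: "p > 0"
  shows "GG p -` (cyl p n r \<times> cyl p n s) \<inter> space (mu p \<Otimes>\<^sub>M mu p) =
         FF p -` (cyl p n r \<times> cyl p n ((- s) mod int p ^ n)) \<inter> space (mu p \<Otimes>\<^sub>M mu p)"
proof (rule set_eqI)
  fix z :: "(nat \<Rightarrow> int) \<times> (nat \<Rightarrow> int)"
  obtain x y where z: "z = (x, y)" by (cases z)
  have key: "(- w) mod int p ^ n = s \<longleftrightarrow> w mod int p ^ n = (- s) mod int p ^ n" for w :: int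
  proof -
    have "(- w) mod int p ^ n = s \<longleftrightarrow> (- w) mod int p ^ n = s mod int p ^ n" using s by simp
    also have "\<dots> \<longleftrightarrow> int p ^ n dvd (- w) - s" by (simp add: mod_eq_dvd_iff)
    also have "\<dots> \<longleftrightarrow> int p ^ n dvd w - (- s)"
    proof -
      have eq: "(- w) - s = - (w - (- s))" by simp
      show ?thesis by (simp only: eq dvd_minus_iff)
    qed
    also have "\<dots> \<longleftrightarrow> w mod int p ^ n = (- s) mod int p ^ n" by (simp add: mod_eq_dvd_iff)
    finally show ?thesis .
  qed
  show "z \<in> GG p -` (cyl p n r \<times> cyl p n s) \<inter> space (mu p \<Otimes>\<^sub>M mu p) \<longleftrightarrow>
        z \<in> FF p -` (cyl p n r \<times> cyl p n ((- s) mod int p ^ n)) \<inter> space (mu p \<Otimes>\<^sub>M mu p)"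
  proof (cases "x \<in> padic p \<and> y \<in> padic p")
    case True
    then have xy: "x \<in> padic p" "y \<in> padic p" by auto
    have "(- x n - int p * y n) mod int p ^ n = s \<longleftrightarrow> (x n + int p * y n) mod int p ^ n = (- s) mod int p ^ n"
      using key[of "x n + int p * y n"] by (simp add: algebra_simps)
    then show ?thesis
      using lin_padic[OF p xy] by (simp add: z FF_def GG_def cyl_def space_pair_measure xy lin_apply)
  next
    case False
    then show ?thesis by (auto simp: z space_pair_measure)
  qed
qed



lemma modp_modq: "n \<ge> 1 \<Longrightarrow> (z mod int p ^ n) mod int p = z mod int p"
  by (rule mod_mod_cancel) (simp add: dvd_power)

lemma mod_pa_b: "(int p * a - b) mod int p = (- b) mod int p"
proof -
  have eq: "int p * a - b = - b + a * int p" by simp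
  show ?thesis by (simp only: eq mod_mult_self1)
qed

lemma mod0_neg: "((- z) mod int p = 0) \<longleftrightarrow> (z mod int p = 0)"
  by (simp add: mod_eq_0_iff_dvd)

lemma cyl_out: "\<not> (0 \<le> r \<and> r < int p ^ n) \<Longrightarrow> cyl p n r = {}"
  using padic_range[of _ p n] by (auto simp: cyl_def)

lemma prob_Mx: "p > 1 \<Longrightarrow> prob_space (mu p \<Otimes>\<^sub>M mu p)"
  by (intro prob_space_pair prob_mu)

lemma sym_FG:
  assumes pr: "prime p"
  shows "distr (mu p \<Otimes>\<^sub>M mu p) (padic_borel p \<Otimes>\<^sub>M padic_borel p) (FF p) =
         distr (mu p \<Otimes>\<^sub>M mu p) (padic_borel p \<Otimes>\<^sub>M padic_borel p) (GG p)"
proof -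
  have p: "p > 1" using pr prime_gt_1_nat by blast
  then have p0: "p > 0" by simp
  interpret mu: prob_space "mu p" by (rule prob_mu[OF p])
  let ?Mx = "mu p \<Otimes>\<^sub>M mu p"
  show ?thesis
  proof (rule measure_eq_padic2[OF p0])
    have "prob_space (distr ?Mx (padic_borel p \<Otimes>\<^sub>M padic_borel p) (FF p))"
      by (rule prob_space.prob_space_distr[OF prob_Mx[OF p] meas_FF[OF p0]])
    then show "finite_measure (distr ?Mx (padic_borel p \<Otimes>\<^sub>M padic_borel p) (FF p))"
      by (simp add: prob_space_def)
    show "sets (distr ?Mx (padic_borel p \<Otimes>\<^sub>M padic_borel p) (FF p)) = sets (padic_borel p \<Otimes>\<^sub>M padic_borel p)"
      by simp
    show "sets (distr ?Mx (padic_borel p \<Otimes>\<^sub>M padic_borel p) (GG p)) = sets (padic_borel p \<Otimes>\<^sub>M padic_borel p)"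
      by simp
    fix n r s
    let ?q = "int p ^ n"
    have R: "cyl p n r \<times> cyl p n s \<in> sets (padic_borel p \<Otimes>\<^sub>M padic_borel p)"
      by (rule pair_measureI[OF cyl_sets[OF p0] cyl_sets[OF p0]])
    have "emeasure ?Mx (FF p -` (cyl p n r \<times> cyl p n s) \<inter> space ?Mx) =
          emeasure ?Mx (GG p -` (cyl p n r \<times> cyl p n s) \<inter> space ?Mx)"
    proof (cases "0 \<le> r \<and> r < ?q \<and> 0 \<le> s \<and> s < ?q")
      case True
      have q: "?q > 0" using p0 by simp
      obtain a b where ab: "0 \<le> a" "a < ?q" "0 \<le> b" "b < ?q" "(int p * a - b) mod ?q = r" "(a + int p * b) mod ?q = s"
        using Phi_solve[OF p0, of r n s] True by blast
      have s': "0 \<le> (- s) mod ?q" "(- s) mod ?q < ?q" using q by auto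
      obtain a' b' where ab': "0 \<le> a'" "a' < ?q" "0 \<le> b'" "b' < ?q" "(int p * a' - b') mod ?q = r"
          "(a' + int p * b') mod ?q = (- s) mod ?q"
        using Phi_solve[OF p0, of r n "(- s) mod ?q"] True s' by blast
      have "emeasure ?Mx (FF p -` (cyl p n r \<times> cyl p n s) \<inter> space ?Mx) = emeasure ?Mx (cyl p n a \<times> cyl p n b)"
        by (simp add: pre_FF[OF p0 ab])
      also have "\<dots> = emeasure (mu p) (cyl p n a) * emeasure (mu p) (cyl p n b)"
        by (rule mu.emeasure_pair_measure_Times) (simp_all add: cyl_sets[OF p0])
      also have "\<dots> = emeasure (mu p) (cyl p n a') * emeasure (mu p) (cyl p n b')"
      proof (cases "n = 0")
        case True
        then have "a = 0" "b = 0" "a' = 0" "b' = 0" using ab ab' by auto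
        then show ?thesis by simp
      next
        case False
        then have n: "n \<ge> 1" by simp
        have "s mod int p = a mod int p"
          using ab(6) modp_modq[OF n, of "a + int p * b" p] by simp
        moreover have "((- s) mod ?q) mod int p = a' mod int p"
          using ab'(6) modp_modq[OF n, of "a' + int p * b'" p] by simp
        moreover have "((- s) mod ?q) mod int p = (- s) mod int p" by (rule modp_modq[OF n])
        ultimately have A: "a mod int p = 0 \<longleftrightarrow> a' mod int p = 0" using mod0_neg[of s p] by simp
        have "r mod int p = (- b) mod int p"
          using ab(5) modp_modq[OF n, of "int p * a - b" p] by (simp add: mod_pa_b)
        moreover have "r mod int p = (- b') mod int p"
          using ab'(5) modp_modq[OF n, of "int p * a' - b'" p] by (simp add: mod_pa_b)
        ultimately have B: "b mod int p = 0 \<longleftrightarrow> b' mod int p = 0" using mod0_neg[of b p] mod0_neg[of b' p] by simp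
        show ?thesis
          using wt_cong[OF A] wt_cong[OF B]
          by (simp add: mu_cyl[OF p n ab(1,2)] mu_cyl[OF p n ab(3,4)] mu_cyl[OF p n ab'(1,2)] mu_cyl[OF p n ab'(3,4)])
      qed
      also have "\<dots> = emeasure ?Mx (cyl p n a' \<times> cyl p n b')"
        by (rule mu.emeasure_pair_measure_Times[symmetric]) (simp_all add: cyl_sets[OF p0])
      also have "\<dots> = emeasure ?Mx (FF p -` (cyl p n r \<times> cyl p n ((- s) mod ?q)) \<inter> space ?Mx)"
        by (simp add: pre_FF[OF p0 ab'])
      also have "\<dots> = emeasure ?Mx (GG p -` (cyl p n r \<times> cyl p n s) \<inter> space ?Mx)"
        using True by (simp add: GG_pre[OF _ _ p0])
      finally show ?thesis .
    next
      case False
      then have E: "cyl p n r \<times> cyl p n s = {}" using cyl_out[of r p n] cyl_out[of s p n] by auto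
      show ?thesis unfolding E by simp
    qed
    then show "emeasure (distr ?Mx (padic_borel p \<Otimes>\<^sub>M padic_borel p) (FF p)) (cyl p n r \<times> cyl p n s) =
          emeasure (distr ?Mx (padic_borel p \<Otimes>\<^sub>M padic_borel p) (GG p)) (cyl p n r \<times> cyl p n s)"
      by (simp add: emeasure_distr[OF meas_FF[OF p0] R] emeasure_distr[OF meas_GG[OF p0] R])
  qed
qed



lemma distr_snd_mu:
  assumes p: "p > 1"
  shows "distr (mu p \<Otimes>\<^sub>M mu p) (padic_borel p) snd = mu p"
proof (rule measure_eqI)
  interpret mu: prob_space "mu p" by (rule prob_mu[OF p])
  show "sets (distr (mu p \<Otimes>\<^sub>M mu p) (padic_borel p) snd) = sets (mu p)" by simp
  fix A assume A: "A \<in> sets (distr (mu p \<Otimes>\<^sub>M mu p) (padic_borel p) snd)"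
  then have A': "A \<in> sets (mu p)" by simp
  have "emeasure (distr (mu p \<Otimes>\<^sub>M mu p) (padic_borel p) snd) A = emeasure (mu p \<Otimes>\<^sub>M mu p) (snd -` A \<inter> space (mu p \<Otimes>\<^sub>M mu p))"
    using A by (simp add: emeasure_distr[OF meas_snd_mu])
  also have "snd -` A \<inter> space (mu p \<Otimes>\<^sub>M mu p) = space (mu p) \<times> A"
    using sets.sets_into_space[OF A'] by (auto simp: space_pair_measure)
  also have "emeasure (mu p \<Otimes>\<^sub>M mu p) (space (mu p) \<times> A) = emeasure (mu p) (space (mu p)) * emeasure (mu p) A"
    by (rule mu.emeasure_pair_measure_Times) (use A' sets.top[of "padic_borel p"] in simp_all)
  finally show "emeasure (distr (mu p \<Otimes>\<^sub>M mu p) (padic_borel p) snd) A = emeasure (mu p) A"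
    using mu.emeasure_space_1 by simp
qed

lemma distr_fst_mu:
  assumes p: "p > 1"
  shows "distr (mu p \<Otimes>\<^sub>M mu p) (padic_borel p) fst = mu p"
proof -
  interpret mu: prob_space "mu p" by (rule prob_mu[OF p])
  have "distr (mu p \<Otimes>\<^sub>M mu p) (padic_borel p) fst = distr (mu p \<Otimes>\<^sub>M mu p) (mu p) fst"
    by (rule distr_cong) simp_all
  also have "\<dots> = mu p" by (rule mu.distr_pair_fst)
  finally show ?thesis .
qed

theorem lemma5:
  fixes p :: nat
  assumes "prime p"
  shows "\<exists>(M :: ((nat \<Rightarrow> int) \<times> (nat \<Rightarrow> int)) measure) \<xi>1 \<xi>2.
     prob_space M \<and>
     \<xi>1 \<in> M \<rightarrow>\<^sub>M padic_borel p \<and> \<xi>2 \<in> M \<rightarrow>\<^sub>M padic_borel p \<and>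
     prob_space.indep_var M (padic_borel p) \<xi>1 (padic_borel p) \<xi>2 \<and>
     distr M (padic_borel p \<Otimes>\<^sub>M padic_borel p)
       (\<lambda>\<omega>. (padic_add p (padic_smul p (int p) (\<xi>1 \<omega>)) (padic_neg p (\<xi>2 \<omega>)),
              padic_add p (\<xi>1 \<omega>) (padic_smul p (int p) (\<xi>2 \<omega>))))
     = distr M (padic_borel p \<Otimes>\<^sub>M padic_borel p)
       (\<lambda>\<omega>. (padic_add p (padic_smul p (int p) (\<xi>1 \<omega>)) (padic_neg p (\<xi>2 \<omega>)),
              padic_neg p (padic_add p (\<xi>1 \<omega>) (padic_smul p (int p) (\<xi>2 \<omega>))))) \<and>
     \<not> padic_I p (distr M (padic_borel p) \<xi>1) \<and>
     \<not> padic_I p (distr M (padic_borel p) \<xi>2)"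
proof -
  have p: "p > 1" using assms prime_gt_1_nat by blast
  then have p0: "p > 0" by simp
  let ?M = "mu p \<Otimes>\<^sub>M mu p"
  let ?P = "padic_borel p"
  interpret Mx: prob_space ?M by (rule prob_Mx[OF p])
  have indep: "Mx.indep_var ?P fst ?P snd"
  proof (subst Mx.indep_var_distribution_eq, intro conjI)
    show "fst \<in> ?M \<rightarrow>\<^sub>M ?P" by (rule meas_fst_mu)
    show "snd \<in> ?M \<rightarrow>\<^sub>M ?P" by (rule meas_snd_mu)
    have "distr ?M (?P \<Otimes>\<^sub>M ?P) (\<lambda>x. (fst x, snd x)) = distr ?M ?M (\<lambda>x. x)"
    proof (rule distr_cong)
      show "sets (?P \<Otimes>\<^sub>M ?P) = sets ?M" by (rule sets_pair_measure_cong) simp_all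
    qed simp_all
    also have "\<dots> = ?M" by simp
    finally show "distr ?M ?P fst \<Otimes>\<^sub>M distr ?M ?P snd = distr ?M (?P \<Otimes>\<^sub>M ?P) (\<lambda>x. (fst x, snd x))"
      by (simp add: distr_fst_mu[OF p] distr_snd_mu[OF p])
  qed
  have symm: "distr ?M (?P \<Otimes>\<^sub>M ?P)
       (\<lambda>\<omega>. (padic_add p (padic_smul p (int p) (fst \<omega>)) (padic_neg p (snd \<omega>)),
              padic_add p (fst \<omega>) (padic_smul p (int p) (snd \<omega>))))
     = distr ?M (?P \<Otimes>\<^sub>M ?P)
       (\<lambda>\<omega>. (padic_add p (padic_smul p (int p) (fst \<omega>)) (padic_neg p (snd \<omega>)),
              padic_neg p (padic_add p (fst \<omega>) (padic_smul p (int p) (snd \<omega>)))))"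
  proof -
    have e1: "(\<lambda>\<omega>. (padic_add p (padic_smul p (int p) (fst \<omega>)) (padic_neg p (snd \<omega>)),
              padic_add p (fst \<omega>) (padic_smul p (int p) (snd \<omega>)))) = FF p"
      by (rule ext) (simp add: FF_def L1_lin L2_lin)
    have e2: "(\<lambda>\<omega>. (padic_add p (padic_smul p (int p) (fst \<omega>)) (padic_neg p (snd \<omega>)),
              padic_neg p (padic_add p (fst \<omega>) (padic_smul p (int p) (snd \<omega>))))) = GG p"
      by (rule ext) (simp add: GG_def L1_lin L2n_lin)
    show ?thesis unfolding e1 e2 by (rule sym_FG[OF assms])
  qed
  have nI1: "\<not> padic_I p (distr ?M ?P fst)" using not_I[OF assms] by (simp add: distr_fst_mu[OF p])
  have nI2: "\<not> padic_I p (distr ?M ?P snd)" using not_I[OF assms] by (simp add: distr_snd_mu[OF p])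
  show ?thesis
    apply (rule exI[of _ ?M], rule exI[of _ fst], rule exI[of _ snd])
    using prob_Mx[OF p] meas_fst_mu meas_snd_mu indep symm nI1 nI2 by blast
qed


end
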